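(* Let $E$ be a real topological vector space, $f:E\to\mathbb{R}$ and $x\in E$. If $f$ is $D^-_M$-differentiable at $x$, then $D^-_Mf(x):E\to\mathbb{R}$ is a superlinear functional, and $D^-f(x)$ is superlinear if and only if $D^-f(x)=D^-_Mf(x)$. Similarly, if $f$ is $D^+_M$-differentiable at $x$, then $D^+_Mf(x)$ is a sublinear functional, and $D^+f(x)$ is sublinear if and only if $D^+f(x)=D^+_Mf(x)$.
   Context: $D^-f(x)(u):=\liminf_{t\to0^+}\frac{f(x+tu)-f(x)}{t}$ and $D^+f(x)(u):=\limsup_{t\to0^+}\frac{f(x+tu)-f(x)}{t}$, with $D^-f(x)(0)=D^+f(x)(0)=0$. $D^-_Mf(x)(u):=\inf_{w\in E}\{D^-f(x)(u+w)-D^-f(x)(w)\}$ and $D^+_Mf(x)(u):=\sup_{w\in E}\{D^+f(x)(u+w)-D^+f(x)(w)\}$. $f$ is $D^-_M$-differentiable (resp. $D^+_M$-differentiable) at $x$ if $D^-_Mf(x)(u)$ and $D^-f(x)(u)$ (resp. $D^+_Mf(x)(u)$ and $D^+f(x)(u)$) are finite for all $u\in E$. A map $p:E\to\mathbb{R}$ is sublinear if $p(x+y)\le p(x)+p(y)$ and $p(\lambda x)=\lambda p(x)$ for all $x,y\in E$, $\lambda\ge0$; superlinear if $-p$ is sublinear. *)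

theory Defs
  imports "HOL-Analysis.Analysis"
begin

definition tvs :: "('a::{real_vector,topological_space}) itself \<Rightarrow> bool" where
  "tvs _ \<longleftrightarrow> continuous_on UNIV (\<lambda>(x::'a, y::'a). x + y)
            \<and> continuous_on UNIV (\<lambda>(c::real, x::'a). c *\<^sub>R x)"

definition Dlow :: "('a::real_vector \<Rightarrow> real) \<Rightarrow> 'a \<Rightarrow> 'a \<Rightarrow> ereal" where
  "Dlow f x u = (if u = 0 then 0 else
     Liminf (at_right (0::real)) (\<lambda>t. ereal ((f (x + t *\<^sub>R u) - f x) / t)))"

definition Dup :: "('a::real_vector \<Rightarrow> real) \<Rightarrow> 'a \<Rightarrow> 'a \<Rightarrow> ereal" where
  "Dup f x u = (if u = 0 then 0 else
     Limsup (at_right (0::real)) (\<lambda>t. ereal ((f (x + t *\<^sub>R u) - f x) / t)))"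

definition DMlow :: "('a::real_vector \<Rightarrow> real) \<Rightarrow> 'a \<Rightarrow> 'a \<Rightarrow> ereal" where
  "DMlow f x u = (INF w. Dlow f x (u + w) - Dlow f x w)"

definition DMup :: "('a::real_vector \<Rightarrow> real) \<Rightarrow> 'a \<Rightarrow> 'a \<Rightarrow> ereal" where
  "DMup f x u = (SUP w. Dup f x (u + w) - Dup f x w)"

definition DMlow_differentiable :: "('a::real_vector \<Rightarrow> real) \<Rightarrow> 'a \<Rightarrow> bool" where
  "DMlow_differentiable f x \<longleftrightarrow> (\<forall>u. \<bar>DMlow f x u\<bar> \<noteq> \<infinity> \<and> \<bar>Dlow f x u\<bar> \<noteq> \<infinity>)"

definition DMup_differentiable :: "('a::real_vector \<Rightarrow> real) \<Rightarrow> 'a \<Rightarrow> bool" where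
  "DMup_differentiable f x \<longleftrightarrow> (\<forall>u. \<bar>DMup f x u\<bar> \<noteq> \<infinity> \<and> \<bar>Dup f x u\<bar> \<noteq> \<infinity>)"

definition sublinear :: "('a::real_vector \<Rightarrow> real) \<Rightarrow> bool" where
  "sublinear p \<longleftrightarrow> (\<forall>x y. p (x + y) \<le> p x + p y) \<and> (\<forall>x (l::real). l \<ge> 0 \<longrightarrow> p (l *\<^sub>R x) = l * p x)"

definition superlinear :: "('a::real_vector \<Rightarrow> real) \<Rightarrow> bool" where
  "superlinear p \<longleftrightarrow> sublinear (\<lambda>x. - p x)"

end

theory Submission
  imports Defs
begin

lemma abstract_part:
  fixes g H :: "'a::real_vector \<Rightarrow> real"
  assumes hom: "\<And>c u. c > 0 \<Longrightarrow> g (c *\<^sub>R u) = c * g u"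
    and g0: "g 0 = 0"
    and low: "\<And>u w. H u \<le> g (u + w) - g w"
    and great: "\<And>u r. (\<And>w. r \<le> g (u + w) - g w) \<Longrightarrow> r \<le> H u"
  shows "superlinear H \<and> (superlinear g \<longleftrightarrow> g = H)"
proof -
  have supH: "superlinear H"
    unfolding superlinear_def sublinear_def
  proof (intro conjI allI impI)
    fix u v
    have "H u + H v \<le> H (u + v)"
    proof (rule great)
      fix w
      have "H u \<le> g (u + (v + w)) - g (v + w)" by (rule low)
      moreover have "H v \<le> g (v + w) - g w" by (rule low)
      ultimately show "H u + H v \<le> g (u + v + w) - g w" by (simp add: add.assoc)
    qed
    then show "- H (u + v) \<le> - H u + - H v" by simp
  next
    fix u and l :: real
    assume l: "0 \<le> l"
    show "- H (l *\<^sub>R u) = l * - H u"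
    proof (cases "l = 0")
      case True
      have "H 0 \<le> 0" using low[of 0 0] by simp
      moreover have "0 \<le> H 0" by (rule great) simp
      ultimately show ?thesis using True by simp
    next
      case False
      then have lp: "l > 0" using l by simp
      have "H (l *\<^sub>R u) / l \<le> H u"
      proof (rule great)
        fix w
        have "H (l *\<^sub>R u) \<le> g (l *\<^sub>R u + l *\<^sub>R w) - g (l *\<^sub>R w)" by (rule low)
        also have "\<dots> = l * (g (u + w) - g w)"
          using hom[OF lp, of "u + w"] hom[OF lp, of w]
          by (simp add: scaleR_right_distrib right_diff_distrib)
        finally show "H (l *\<^sub>R u) / l \<le> g (u + w) - g w" using lp
          by (simp add: divide_le_eq mult.commute)
      qed
      then have a: "H (l *\<^sub>R u) \<le> l * H u" using lp by (simp add: divide_le_eq mult.commute)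
      have "l * H u \<le> H (l *\<^sub>R u)"
      proof (rule great)
        fix w
        have "H u \<le> g (u + w /\<^sub>R l) - g (w /\<^sub>R l)" by (rule low)
        then have "l * H u \<le> l * (g (u + w /\<^sub>R l) - g (w /\<^sub>R l))" using lp by simp
        also have "\<dots> = g (l *\<^sub>R (u + w /\<^sub>R l)) - g (l *\<^sub>R (w /\<^sub>R l))"
          using hom[OF lp, of "u + w /\<^sub>R l"] hom[OF lp, of "w /\<^sub>R l"]
          by (simp add: right_diff_distrib)
        also have "\<dots> = g (l *\<^sub>R u + w) - g w" using lp by (simp add: scaleR_right_distrib)
        finally show "l * H u \<le> g (l *\<^sub>R u + w) - g w" .
      qed
      with a show ?thesis by simp
    qed
  qed
  have "superlinear g \<longleftrightarrow> g = H"
  proof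
    assume sg: "superlinear g"
    show "g = H"
    proof
      fix u
      have "H u \<le> g u" using low[of u 0] g0 by simp
      moreover have "g u \<le> H u"
      proof (rule great)
        fix w
        have "- g (u + w) \<le> - g u + - g w" using sg unfolding superlinear_def sublinear_def by blast
        then show "g u \<le> g (u + w) - g w" by simp
      qed
      ultimately show "g u = H u" by simp
    qed
  next
    assume "g = H"
    then show "superlinear g" using supH by simp
  qed
  with supH show ?thesis by simp
qed

lemma Dlow_hom:
  assumes c: "c > 0"
  shows "Dlow f x (c *\<^sub>R u) = ereal c * Dlow f x u"
proof (cases "u = 0")
  case True then show ?thesis by (simp add: Dlow_def)
next
  case False
  define \<psi> where "\<psi> = (\<lambda>s. ereal ((f (x + s *\<^sub>R u) - f x) / s))"
  have eq: "(\<lambda>t. ereal ((f (x + t *\<^sub>R (c *\<^sub>R u)) - f x) / t)) = (\<lambda>t. ereal c * \<psi> (c * t))"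
  proof
    fix t :: real
    show "ereal ((f (x + t *\<^sub>R (c *\<^sub>R u)) - f x) / t) = ereal c * \<psi> (c * t)"
      using c by (cases "t = 0") (simp_all add: \<psi>_def field_simps)
  qed
  have inj: "inj (times c)" using c by (simp add: inj_on_def)
  have "Liminf (at_right 0) (\<lambda>t. ereal c * \<psi> (c * t)) = ereal c * Liminf (at_right 0) (\<lambda>t. \<psi> (c * t))"
    using c by (intro Liminf_ereal_mult_left) simp_all
  also have "Liminf (at_right 0) (\<lambda>t. \<psi> (c * t)) = Liminf (filtermap (times c) (at_right 0)) \<psi>"
    by (rule Liminf_filtermap_eq[OF inj, symmetric])
  also have "filtermap (times c) (at_right 0) = at_right (0::real)"
    using filtermap_times_pos_at_right[OF c, of 0] by simp
  finally show ?thesis using False c eq by (simp add: Dlow_def \<psi>_def)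
qed

lemma Dup_hom:
  assumes c: "c > 0"
  shows "Dup f x (c *\<^sub>R u) = ereal c * Dup f x u"
proof (cases "u = 0")
  case True then show ?thesis by (simp add: Dup_def)
next
  case False
  define \<psi> where "\<psi> = (\<lambda>s. ereal ((f (x + s *\<^sub>R u) - f x) / s))"
  have eq: "(\<lambda>t. ereal ((f (x + t *\<^sub>R (c *\<^sub>R u)) - f x) / t)) = (\<lambda>t. ereal c * \<psi> (c * t))"
  proof
    fix t :: real
    show "ereal ((f (x + t *\<^sub>R (c *\<^sub>R u)) - f x) / t) = ereal c * \<psi> (c * t)"
      using c by (cases "t = 0") (simp_all add: \<psi>_def field_simps)
  qed
  have inj: "inj (times c)" using c by (simp add: inj_on_def)
  have "Limsup (at_right 0) (\<lambda>t. ereal c * \<psi> (c * t)) = ereal c * Limsup (at_right 0) (\<lambda>t. \<psi> (c * t))"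
    using c by (intro Limsup_ereal_mult_left) simp_all
  also have "Limsup (at_right 0) (\<lambda>t. \<psi> (c * t)) = Limsup (filtermap (times c) (at_right 0)) \<psi>"
    by (rule Limsup_filtermap_eq[OF inj, symmetric])
  also have "filtermap (times c) (at_right 0) = at_right (0::real)"
    using filtermap_times_pos_at_right[OF c, of 0] by simp
  finally show ?thesis using False c eq by (simp add: Dup_def \<psi>_def)
qed


theorem proposition2p2:
  fixes f :: "'a::{real_vector,topological_space} \<Rightarrow> real" and x :: 'a
  assumes "tvs TYPE('a)"
  shows "(DMlow_differentiable f x \<longrightarrow>
            superlinear (\<lambda>u. real_of_ereal (DMlow f x u)) \<and>
            (superlinear (\<lambda>u. real_of_ereal (Dlow f x u)) \<longleftrightarrow> (\<forall>u. Dlow f x u = DMlow f x u)))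
       \<and> (DMup_differentiable f x \<longrightarrow>
            sublinear (\<lambda>u. real_of_ereal (DMup f x u)) \<and>
            (sublinear (\<lambda>u. real_of_ereal (Dup f x u)) \<longleftrightarrow> (\<forall>u. Dup f x u = DMup f x u)))"
proof (intro conjI impI)
  assume d: "DMlow_differentiable f x"
  define g where "g = (\<lambda>u. real_of_ereal (Dlow f x u))"
  define H where "H = (\<lambda>u. real_of_ereal (DMlow f x u))"
  have gE: "Dlow f x u = ereal (g u)" for u
    using d unfolding DMlow_differentiable_def g_def by (metis ereal_real')
  have HE: "DMlow f x u = ereal (H u)" for u
    using d unfolding DMlow_differentiable_def H_def by (metis ereal_real')
  have low: "H u \<le> g (u + w) - g w" for u w
  proof -
    have "DMlow f x u \<le> Dlow f x (u + w) - Dlow f x w"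
      unfolding DMlow_def by (rule INF_lower) simp
    then show ?thesis by (simp add: gE HE)
  qed
  have great: "r \<le> H u" if "\<And>w. r \<le> g (u + w) - g w" for u r
  proof -
    have "ereal r \<le> DMlow f x u"
      unfolding DMlow_def by (rule INF_greatest) (use that in \<open>simp add: gE\<close>)
    then show ?thesis by (simp add: HE)
  qed
  have hom: "g (c *\<^sub>R u) = c * g u" if "c > 0" for c u
    using Dlow_hom[OF that, of f x u] by (simp add: gE)
  have g0: "g 0 = 0" by (simp add: g_def Dlow_def)
  note A = abstract_part[of g H, OF hom g0 low great]
  have eqv: "(\<forall>u. Dlow f x u = DMlow f x u) \<longleftrightarrow> g = H"
    by (auto simp: gE HE fun_eq_iff)
  show "superlinear (\<lambda>u. real_of_ereal (DMlow f x u))"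
    using A by (simp add: H_def)
  show "superlinear (\<lambda>u. real_of_ereal (Dlow f x u)) = (\<forall>u. Dlow f x u = DMlow f x u)"
    using A eqv by (simp add: g_def)
next
  assume d: "DMup_differentiable f x"
  define g where "g = (\<lambda>u. real_of_ereal (Dup f x u))"
  define H where "H = (\<lambda>u. real_of_ereal (DMup f x u))"
  have gE: "Dup f x u = ereal (g u)" for u
    using d unfolding DMup_differentiable_def g_def by (metis ereal_real')
  have HE: "DMup f x u = ereal (H u)" for u
    using d unfolding DMup_differentiable_def H_def by (metis ereal_real')
  have low: "- H u \<le> - g (u + w) - - g w" for u w
  proof -
    have "Dup f x (u + w) - Dup f x w \<le> DMup f x u"
      unfolding DMup_def by (rule SUP_upper) simp
    then show ?thesis by (simp add: gE HE)
  qed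
  have great: "r \<le> - H u" if "\<And>w. r \<le> - g (u + w) - - g w" for u r
  proof -
    have "DMup f x u \<le> ereal (- r)"
      unfolding DMup_def
    proof (rule SUP_least)
      fix w
      have "g (u + w) - g w \<le> - r" using that[of w] by simp
      then show "Dup f x (u + w) - Dup f x w \<le> ereal (- r)" by (simp add: gE)
    qed
    then show ?thesis by (simp add: HE)
  qed
  have hom: "- g (c *\<^sub>R u) = c * - g u" if "c > 0" for c u
    using Dup_hom[OF that, of f x u] by (simp add: gE)
  have g0: "- g 0 = 0" by (simp add: g_def Dup_def)
  note A = abstract_part[of "\<lambda>u. - g u" "\<lambda>u. - H u", OF hom g0 low great]
  have eqv: "(\<forall>u. Dup f x u = DMup f x u) \<longleftrightarrow> ((\<lambda>u. - g u) = (\<lambda>u. - H u))"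
    by (auto simp: gE HE fun_eq_iff)
  show "sublinear (\<lambda>u. real_of_ereal (DMup f x u))"
    using A by (simp add: H_def superlinear_def)
  show "sublinear (\<lambda>u. real_of_ereal (Dup f x u)) = (\<forall>u. Dup f x u = DMup f x u)"
    using A eqv by (simp add: g_def superlinear_def)
qed
end
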